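(* Let $[X,d,m]$ be a metric random walk space with invariant and reversible measure $\nu$. The following are equivalent: (1) $X$ is $m$-connected; (2) whenever $A,B\subset X$ are $\nu$-measurable sets with $\nu(A)>0$, $\nu(B)>0$ and $A\cup B=X$, one has $L_m(A,B)>0$.
   Context: A metric random walk space $[X,d,m]$ is a Polish metric space $(X,d)$ with a family $m=(m_x)_{x\in X}$ of Borel probability measures, $x\mapsto m_x(A)$ Borel measurable, each with finite first moment. A Radon measure $\nu$ is invariant if $\nu(A)=\int_X m_x(A)d\nu(x)$ for all $\nu$-measurable $A$, reversible if $dm_x(y)d\nu(x)=dm_y(x)d\nu(y)$; $(X,\nu)$ is $\sigma$-finite. Iterates $m_x^{*1}=m_x$, $m_x^{*n}(A)=\int_X m_z(A)dm_x^{*(n-1)}(z)$; $N^m_D=\{x:m_x^{*n}(D)=0\ \forall n\}$. The space is $m$-connected if $\nu(N^m_D)=0$ for every $\nu$-measurable $D$ with $0<\nu(D)<\infty$. The nonlocal interaction of $\nu$-measurable sets is $L_m(A,B)=\int_A\int_B dm_x(y)\,d\nu(x)$. *)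

theory Defs
  imports "HOL-Analysis.Analysis"
begin

definition metric_random_walk :: "('a::polish_space \<Rightarrow> 'a measure) \<Rightarrow> bool" where
  "metric_random_walk m \<longleftrightarrow>
     (\<forall>x. sets (m x) = sets borel \<and> emeasure (m x) UNIV = 1) \<and>
     (\<forall>A \<in> sets borel. (\<lambda>x. emeasure (m x) A) \<in> borel_measurable borel) \<and>
     (\<forall>x. (\<integral>\<^sup>+ y. ennreal (dist x y) \<partial>(m x)) < \<infinity>)"

text \<open>Radon measure on the Polish space: Borel, locally finite (on Polish spaces this
  implies inner regularity) and sigma-finite.\<close>
definition radon_measure :: "'a::polish_space measure \<Rightarrow> bool" where
  "radon_measure \<nu> \<longleftrightarrow> sets \<nu> = sets borel \<and> sigma_finite_measure \<nu> \<and>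
     (\<forall>x. \<exists>e>0. emeasure \<nu> (ball x e) < \<infinity>)"

definition invariant_measure :: "('a::polish_space \<Rightarrow> 'a measure) \<Rightarrow> 'a measure \<Rightarrow> bool" where
  "invariant_measure m \<nu> \<longleftrightarrow>
     (\<forall>A \<in> sets \<nu>. emeasure \<nu> A = (\<integral>\<^sup>+ x. emeasure (m x) A \<partial>\<nu>))"

text \<open>Reversibility: dm_x(y) d\<nu>(x) = dm_y(x) d\<nu>(y) as measures on X \<times> X, i.e. they
  integrate every nonnegative Borel function on X \<times> X to the same value.\<close>
definition reversible_measure :: "('a::polish_space \<Rightarrow> 'a measure) \<Rightarrow> 'a measure \<Rightarrow> bool" where
  "reversible_measure m \<nu> \<longleftrightarrow>
     (\<forall>f :: 'a \<Rightarrow> 'a \<Rightarrow> ennreal. (\<lambda>(x, y). f x y) \<in> borel_measurable (borel \<Otimes>\<^sub>M borel) \<longrightarrow>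
        (\<integral>\<^sup>+ x. (\<integral>\<^sup>+ y. f x y \<partial>(m x)) \<partial>\<nu>) = (\<integral>\<^sup>+ y. (\<integral>\<^sup>+ x. f x y \<partial>(m y)) \<partial>\<nu>))"

text \<open>Iterates, shifted by one: m_iter m n x is m_x^{*(n+1)}. So m_iter m 0 x = m_x and
  m_x^{*(n+2)}(A) = \<integral> m_z(A) d m_x^{*(n+1)}(z).\<close>
fun m_iter :: "('a::polish_space \<Rightarrow> 'a measure) \<Rightarrow> nat \<Rightarrow> 'a \<Rightarrow> 'a measure" where
  "m_iter m 0 x = m x"
| "m_iter m (Suc n) x =
     measure_of UNIV (sets borel) (\<lambda>A. \<integral>\<^sup>+ z. emeasure (m z) A \<partial>(m_iter m n x))"

definition N_set :: "('a::polish_space \<Rightarrow> 'a measure) \<Rightarrow> 'a set \<Rightarrow> 'a set" where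
  "N_set m D = {x. \<forall>n. emeasure (m_iter m n x) D = 0}"

text \<open>\<nu>-measurable sets are taken to be the Borel sets (= sets \<nu>).\<close>
definition m_connected :: "('a::polish_space \<Rightarrow> 'a measure) \<Rightarrow> 'a measure \<Rightarrow> bool" where
  "m_connected m \<nu> \<longleftrightarrow>
     (\<forall>D \<in> sets \<nu>. 0 < emeasure \<nu> D \<and> emeasure \<nu> D < \<infinity> \<longrightarrow> N_set m D \<in> null_sets \<nu>)"

definition L_m :: "('a::polish_space \<Rightarrow> 'a measure) \<Rightarrow> 'a measure \<Rightarrow> 'a set \<Rightarrow> 'a set \<Rightarrow> ennreal" where
  "L_m m \<nu> A B = (\<integral>\<^sup>+ x. emeasure (m x) B * indicator A x \<partial>\<nu>)"

end

theory Submission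
  imports Defs "HOL-Probability.Probability"
begin

lemma mrw_sets: "metric_random_walk m \<Longrightarrow> sets (m x) = sets borel"
  by (simp add: metric_random_walk_def)

lemma mrw_space: "metric_random_walk m \<Longrightarrow> space (m x) = UNIV"
  using sets_eq_imp_space_eq[OF mrw_sets] by simp

lemma mrw_prob: "metric_random_walk m \<Longrightarrow> prob_space (m x)"
  by (rule prob_spaceI) (simp add: mrw_space metric_random_walk_def)

lemma mrw_emeas: "metric_random_walk m \<Longrightarrow> A \<in> sets borel \<Longrightarrow> (\<lambda>x. emeasure (m x) A) \<in> borel_measurable borel"
  by (simp add: metric_random_walk_def)

lemma mrw_mcong: "metric_random_walk m \<Longrightarrow> f \<in> borel_measurable borel \<Longrightarrow> f \<in> borel_measurable (m x)"
  by (simp add: measurable_cong_sets[OF mrw_sets refl])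

lemma mrw_meas: "metric_random_walk m \<Longrightarrow> m \<in> borel \<rightarrow>\<^sub>M subprob_algebra borel"
  apply (rule measurable_subprob_algebra)
  using mrw_prob prob_space_imp_subprob_space mrw_sets
  by (auto simp: metric_random_walk_def)

lemma iter_sets: "metric_random_walk m \<Longrightarrow> sets (m_iter m n x) = sets borel"
proof (induction n)
  case 0 then show ?case by (simp add: mrw_sets)
next
  case (Suc n)
  have "sets (measure_of UNIV (sets borel) (\<lambda>A. \<integral>\<^sup>+ z. emeasure (m z) A \<partial>(m_iter m n x))) = sigma_sets UNIV (sets borel)"
    by (rule sets_measure_of) simp
  also have "\<dots> = sets borel" using sets.sigma_sets_eq[of borel] by simp
  finally show ?case by simp
qed

lemma iter_space: "metric_random_walk m \<Longrightarrow> space (m_iter m n x) = UNIV"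
  using sets_eq_imp_space_eq[OF iter_sets] by simp

lemma iter_bind: assumes mrw: "metric_random_walk m"
  shows "m_iter m (Suc n) x = m_iter m n x \<bind> m"
proof -
  have "m_iter m n x \<bind> m = join (distr (m_iter m n x) (subprob_algebra borel) m)"
    by (rule bind_nonempty'') (auto simp: iter_space mrw measurable_cong_sets[OF iter_sets[OF mrw] refl] mrw_meas[OF mrw])
  also have "\<dots> = measure_of UNIV (sets borel) (\<lambda>A. \<integral>\<^sup>+ z. emeasure (m z) A \<partial>(m_iter m n x))"
    unfolding join_def
    apply simp
    apply (rule measure_of_eq)
     apply simp
    apply (subst nn_integral_distr)
      apply (auto simp: measurable_cong_sets[OF iter_sets[OF mrw] refl] mrw_meas[OF mrw]
        sets.sigma_sets_eq[of borel, simplified])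
    done
  finally show ?thesis by simp
qed

lemma iter_meas: assumes mrw: "metric_random_walk m"
  shows "m_iter m n \<in> borel \<rightarrow>\<^sub>M subprob_algebra borel"
proof (induction n)
  case 0
  then show ?case using mrw_meas[OF mrw] by simp
next
  case (Suc n)
  have e: "m_iter m (Suc n) = (\<lambda>x. m_iter m n x \<bind> m)"
    using iter_bind[OF mrw] by auto
  show ?case unfolding e
    by (rule measurable_bind[OF Suc]) (rule measurable_compose[OF measurable_snd mrw_meas[OF mrw]])
qed

lemma iter_bind2: assumes mrw: "metric_random_walk m"
  shows "m_iter m (Suc n) x = m x \<bind> m_iter m n"
proof (induction n arbitrary: x)
  case 0
  then show ?case using iter_bind[OF mrw, of 0 x] by simp
next
  case (Suc n)
  have "m_iter m (Suc (Suc n)) x = m_iter m (Suc n) x \<bind> m" by (rule iter_bind[OF mrw])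
  also have "\<dots> = (m x \<bind> m_iter m n) \<bind> m" using Suc by simp
  also have "\<dots> = m x \<bind> (\<lambda>z. m_iter m n z \<bind> m)"
    by (rule bind_assoc[where N=borel and R=borel]) (auto simp: measurable_cong_sets[OF mrw_sets[OF mrw] refl] iter_meas[OF mrw] mrw_meas[OF mrw])
  also have "(\<lambda>z. m_iter m n z \<bind> m) = m_iter m (Suc n)"
    by (rule ext) (rule iter_bind[OF mrw, symmetric])
  finally show ?case .
qed

lemma iter_emeasure2: assumes mrw: "metric_random_walk m" and A: "A \<in> sets borel"
  shows "emeasure (m_iter m (Suc n) x) A = (\<integral>\<^sup>+ z. emeasure (m_iter m n z) A \<partial>m x)"
  unfolding iter_bind2[OF mrw]
  by (rule emeasure_bind[where N=borel]) (auto simp: mrw_space[OF mrw] measurable_cong_sets[OF mrw_sets[OF mrw] refl] iter_meas[OF mrw] A)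

lemma iter_emeas: assumes mrw: "metric_random_walk m" and A: "A \<in> sets borel"
  shows "(\<lambda>x. emeasure (m_iter m n x) A) \<in> borel_measurable borel"
  by (rule measurable_compose[OF iter_meas[OF mrw] measurable_emeasure_subprob_algebra[OF A]])

lemma N_sets: assumes mrw: "metric_random_walk m" and D: "D \<in> sets borel"
  shows "N_set m D \<in> sets borel"
proof -
  have "N_set m D = (\<Inter>n\<in>UNIV. (\<lambda>x. emeasure (m_iter m n x) D) -` {0} \<inter> space borel)"
    by (auto simp: N_set_def)
  also have "\<dots> \<in> sets borel"
  proof (rule sets.countable_INT'')
    fix n :: nat
    show "(\<lambda>x. emeasure (m_iter m n x) D) -` {0} \<inter> space borel \<in> sets borel"
      by (rule measurable_sets[OF iter_emeas[OF mrw D]]) simp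
  qed auto
  finally show ?thesis .
qed

lemma N_closed: assumes mrw: "metric_random_walk m" and D: "D \<in> sets borel"
  and x: "x \<in> N_set m D"
  shows "emeasure (m x) (UNIV - N_set m D) = 0"
proof -
  have "\<forall>n. AE z in m x. emeasure (m_iter m n z) D = 0"
  proof
    fix n
    have "emeasure (m_iter m (Suc n) x) D = 0" using x unfolding N_set_def by blast
    then have "0 = emeasure (m_iter m (Suc n) x) D" by simp
    also have "\<dots> = (\<integral>\<^sup>+ z. emeasure (m_iter m n z) D \<partial>m x)" by (rule iter_emeasure2[OF mrw D])
    finally show "AE z in m x. emeasure (m_iter m n z) D = 0"
      using nn_integral_0_iff_AE[of "\<lambda>z. emeasure (m_iter m n z) D" "m x"]
        mrw_mcong[OF mrw iter_emeas[OF mrw D]]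
      by simp
  qed
  then have AEN: "AE z in m x. z \<in> N_set m D"
    by (simp add: N_set_def AE_all_countable)
  have Ns: "UNIV - N_set m D \<in> sets (m x)"
    using sets.compl_sets[OF N_sets[OF mrw D]] by (simp add: mrw_sets[OF mrw])
  have eqs: "{z\<in>space (m x). \<not> z \<in> N_set m D} = UNIV - N_set m D"
    by (auto simp: mrw_space[OF mrw])
  show ?thesis by (rule AE_iff_measurable[THEN iffD1, OF Ns eqs AEN])
qed


theorem proposition2p11:
  fixes m :: "'a::polish_space \<Rightarrow> 'a measure" and \<nu> :: "'a measure"
  assumes "metric_random_walk m"
    and "radon_measure \<nu>"
    and "invariant_measure m \<nu>"
    and "reversible_measure m \<nu>"
  shows "m_connected m \<nu> \<longleftrightarrow>
    (\<forall>A B. A \<in> sets \<nu> \<longrightarrow> B \<in> sets \<nu> \<longrightarrow> 0 < emeasure \<nu> A \<longrightarrow> 0 < emeasure \<nu> B \<longrightarrow>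
       A \<union> B = UNIV \<longrightarrow> 0 < L_m m \<nu> A B)"
proof -
  have mrw: "metric_random_walk m" using assms(1) .
  have sN: "sets \<nu> = sets borel" and sf: "sigma_finite_measure \<nu>"
    using assms(2) by (auto simp: radon_measure_def)
  have spN: "space \<nu> = UNIV" using sets_eq_imp_space_eq[OF sN] by simp
  have inv: "\<And>A. A \<in> sets borel \<Longrightarrow> emeasure \<nu> A = (\<integral>\<^sup>+x. emeasure (m x) A \<partial>\<nu>)"
    using assms(3) sN by (simp add: invariant_measure_def)
  have mcN: "\<And>f. f \<in> borel_measurable borel \<Longrightarrow> f \<in> borel_measurable \<nu>"
    by (simp add: measurable_cong_sets[OF sN refl])
  have inv0: "AE x in \<nu>. emeasure (m x) A = 0" if "A \<in> sets borel" "emeasure \<nu> A = 0" for A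
  proof -
    have "(\<integral>\<^sup>+x. emeasure (m x) A \<partial>\<nu>) = 0" using inv[OF that(1)] that(2) by simp
    then show ?thesis using nn_integral_0_iff_AE[OF mcN[OF mrw_emeas[OF mrw that(1)]]] by simp
  qed
  show ?thesis
  proof
    assume conn: "m_connected m \<nu>"
    show "\<forall>A B. A \<in> sets \<nu> \<longrightarrow> B \<in> sets \<nu> \<longrightarrow> 0 < emeasure \<nu> A \<longrightarrow> 0 < emeasure \<nu> B \<longrightarrow>
       A \<union> B = UNIV \<longrightarrow> 0 < L_m m \<nu> A B"
    proof (intro allI impI)
      fix A B assume A: "A \<in> sets \<nu>" and B: "B \<in> sets \<nu>" and pA: "0 < emeasure \<nu> A"
        and pB: "0 < emeasure \<nu> B" and AB: "A \<union> B = UNIV"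
      have Ab: "A \<in> sets borel" "B \<in> sets borel" using A B sN by auto
      show "0 < L_m m \<nu> A B"
      proof (rule ccontr)
        assume "\<not> 0 < L_m m \<nu> A B"
        then have L0: "(\<integral>\<^sup>+x. emeasure (m x) B * indicator A x \<partial>\<nu>) = 0"
          by (simp add: L_m_def zero_less_iff_neq_zero)
        have meas: "(\<lambda>x. emeasure (m x) B * indicator A x) \<in> borel_measurable \<nu>"
          using mcN[OF mrw_emeas[OF mrw Ab(2)]] A by (intro borel_measurable_times_ennreal borel_measurable_indicator) auto
        have "AE x in \<nu>. emeasure (m x) B * indicator A x = 0"
          using L0 nn_integral_0_iff_AE[OF meas] by simp
        then have H: "AE x in \<nu>. x \<in> A \<longrightarrow> emeasure (m x) B = 0"
          by eventually_elim (auto simp: indicator_def)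
        have A'b: "UNIV - B \<in> sets borel" using sets.compl_sets[OF Ab(2)] by simp
        have A'A: "UNIV - B \<subseteq> A" using AB by auto
        show False
        proof (cases "emeasure \<nu> (UNIV - B) = 0")
          case True
          have "AE x in \<nu>. emeasure (m x) (UNIV - B) = 0" using inv0[OF A'b True] .
          then have "AE x in \<nu>. x \<notin> A" using H
          proof eventually_elim
            case (elim x)
            have "emeasure (m x) B + emeasure (m x) (UNIV - B) = emeasure (m x) (B \<union> (UNIV - B))"
              by (rule plus_emeasure) (auto simp: mrw_sets[OF mrw] Ab A'b)
            also have "\<dots> = 1" using mrw by (simp add: metric_random_walk_def)
            finally show ?case using elim by auto
          qed
          then have "emeasure \<nu> A = 0"
            using AE_iff_measurable[of A \<nu> "\<lambda>x. x \<notin> A"] A spN by auto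
          then show False using pA by simp
        next
          case False
          then have pA': "0 < emeasure \<nu> (UNIV - B)" by (simp add: zero_less_iff_neq_zero)
          obtain D where D: "D \<in> sets borel" "D \<subseteq> B" "0 < emeasure \<nu> D" "emeasure \<nu> D < \<infinity>"
          proof -
            obtain C :: "nat \<Rightarrow> 'a set" where C: "range C \<subseteq> sets \<nu>" "(\<Union>i. C i) = space \<nu>"
              "\<And>i. emeasure \<nu> (C i) \<noteq> \<infinity>"
              using sigma_finite_measure.sigma_finite[OF sf] by metis
            have "\<exists>i. emeasure \<nu> (B \<inter> C i) \<noteq> 0"
            proof (rule ccontr)
              assume "\<not> ?thesis"
              then have "(\<Union>i. B \<inter> C i) \<in> null_sets \<nu>" using B C(1)
                by (intro null_sets_UN) auto
              moreover have "(\<Union>i. B \<inter> C i) = B" using C(2) spN by auto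
              ultimately show False using pB by auto
            qed
            then obtain i where i: "emeasure \<nu> (B \<inter> C i) \<noteq> 0" by auto
            have "emeasure \<nu> (B \<inter> C i) \<le> emeasure \<nu> (C i)" using C(1) B by (intro emeasure_mono) auto
            then have "emeasure \<nu> (B \<inter> C i) < \<infinity>" using C(3)[of i] by (simp add: less_top order_le_less_trans)
            moreover have "B \<inter> C i \<in> sets borel" using C(1) B sN by auto
            ultimately show ?thesis using that[of "B \<inter> C i"] i by (auto simp: zero_less_iff_neq_zero)
          qed
          have Nnull: "N_set m D \<in> null_sets \<nu>" using conn D sN by (auto simp: m_connected_def)
          have step: "AE x in \<nu>. x \<in> UNIV - B \<longrightarrow> emeasure (m_iter m n x) B = 0" for n
          proof (induction n)
            case 0
            show ?case using H by eventually_elim (use A'A in auto)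
          next
            case (Suc n)
            define E where "E = (UNIV - B) \<inter> ((\<lambda>z. emeasure (m_iter m n z) B) -` (UNIV - {0}))"
            have Eb: "E \<in> sets borel"
              using measurable_sets[OF iter_emeas[OF mrw Ab(2)], of "UNIV - {0}"] A'b
              unfolding E_def by auto
            have "emeasure \<nu> E = 0"
              using AE_iff_measurable[of E \<nu> "\<lambda>x. x \<in> UNIV - B \<longrightarrow> emeasure (m_iter m n x) B = 0"]
                Suc Eb sN spN unfolding E_def by auto
            then have AEE: "AE x in \<nu>. emeasure (m x) E = 0" by (rule inv0[OF Eb])
            show ?case using AEE H
            proof eventually_elim
              case (elim x)
              show ?case
              proof
                assume xA': "x \<in> UNIV - B"
                then have mB: "emeasure (m x) B = 0" using elim A'A by auto
                have "AE z in m x. z \<notin> E" using AE_not_in[of E "m x"] elim(1) Eb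
                  by (auto simp: null_sets_def mrw_sets[OF mrw])
                moreover have "AE z in m x. z \<notin> B" using AE_not_in[of B "m x"] mB Ab
                  by (auto simp: null_sets_def mrw_sets[OF mrw])
                ultimately have "AE z in m x. emeasure (m_iter m n z) B = 0"
                  by eventually_elim (auto simp: E_def)
                then have "(\<integral>\<^sup>+z. emeasure (m_iter m n z) B \<partial>m x) = 0"
                  using nn_integral_0_iff_AE[OF mrw_mcong[OF mrw iter_emeas[OF mrw Ab(2)]]] by simp
                then show "emeasure (m_iter m (Suc n) x) B = 0"
                  unfolding iter_emeasure2[OF mrw Ab(2)] .
              qed
            qed
          qed
          have "AE x in \<nu>. \<forall>n. x \<in> UNIV - B \<longrightarrow> emeasure (m_iter m n x) B = 0"
            unfolding AE_all_countable using step by blast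
          then have "AE x in \<nu>. x \<notin> UNIV - B" using AE_not_in[OF Nnull]
          proof eventually_elim
            case (elim x)
            show ?case
            proof
              assume xA': "x \<in> UNIV - B"
              have "x \<in> N_set m D" unfolding N_set_def
              proof (intro CollectI allI)
                fix n
                have "emeasure (m_iter m n x) D \<le> emeasure (m_iter m n x) B"
                  by (rule emeasure_mono) (auto simp: D iter_sets[OF mrw] Ab)
                then show "emeasure (m_iter m n x) D = 0" using elim xA' by auto
              qed
              then show False using elim by auto
            qed
          qed
          then have "emeasure \<nu> (UNIV - B) = 0"
            using AE_iff_measurable[of "UNIV - B" \<nu> "\<lambda>x. x \<notin> UNIV - B"] A'b sN spN by auto
          then show False using pA' by simp
        qed
      qed
    qed
  next
    assume H2: "\<forall>A B. A \<in> sets \<nu> \<longrightarrow> B \<in> sets \<nu> \<longrightarrow> 0 < emeasure \<nu> A \<longrightarrow> 0 < emeasure \<nu> B \<longrightarrow>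
       A \<union> B = UNIV \<longrightarrow> 0 < L_m m \<nu> A B"
    show "m_connected m \<nu>" unfolding m_connected_def
    proof (intro ballI impI)
      fix D assume D: "D \<in> sets \<nu>" and pD: "0 < emeasure \<nu> D \<and> emeasure \<nu> D < \<infinity>"
      have Db: "D \<in> sets borel" using D sN by simp
      define N where "N = N_set m D"
      have Nb: "N \<in> sets borel" unfolding N_def by (rule N_sets[OF mrw Db])
      have NCb: "UNIV - N \<in> sets borel" using sets.compl_sets[OF Nb] by simp
      have cl: "\<And>x. x \<in> N \<Longrightarrow> emeasure (m x) (UNIV - N) = 0"
        unfolding N_def by (rule N_closed[OF mrw Db])
      have DNb: "D \<inter> N \<in> sets borel" using Db Nb by auto
      have mD0: "emeasure (m x) (D \<inter> N) = 0" if "x \<in> N" for x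
      proof -
        have "emeasure (m_iter m 0 x) D = 0" using that unfolding N_def N_set_def by blast
        then have "emeasure (m x) D = 0" by simp
        moreover have "emeasure (m x) (D \<inter> N) \<le> emeasure (m x) D"
          by (rule emeasure_mono) (auto simp: mrw_sets[OF mrw] Db)
        ultimately show ?thesis by simp
      qed
      have fm: "(\<lambda>(x, y). indicator (UNIV - N) x * indicator (D \<inter> N) y :: ennreal) \<in> borel_measurable (borel \<Otimes>\<^sub>M borel)"
        using NCb DNb by measurable
      have rev: "(\<integral>\<^sup>+x. (\<integral>\<^sup>+y. indicator (UNIV - N) x * indicator (D \<inter> N) y \<partial>m x) \<partial>\<nu>) =
          (\<integral>\<^sup>+y. (\<integral>\<^sup>+x. indicator (UNIV - N) x * indicator (D \<inter> N) y \<partial>m y) \<partial>\<nu>)"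
        using assms(4) fm unfolding reversible_measure_def by blast
      have l: "(\<integral>\<^sup>+y. indicator (UNIV - N) x * indicator (D \<inter> N) y \<partial>m x) = indicator (UNIV - N) x * emeasure (m x) (D \<inter> N)" for x
        by (rule nn_integral_cmult_indicator) (simp add: mrw_sets[OF mrw] DNb)
      have r: "(\<integral>\<^sup>+x. indicator (UNIV - N) x * indicator (D \<inter> N) y \<partial>m y) = 0" for y
      proof -
        have "(\<integral>\<^sup>+x. indicator (UNIV - N) x * indicator (D \<inter> N) y \<partial>m y) = (\<integral>\<^sup>+x. indicator (D \<inter> N) y * indicator (UNIV - N) x \<partial>m y)"
          by (simp add: mult.commute)
        also have "\<dots> = indicator (D \<inter> N) y * emeasure (m y) (UNIV - N)"
          by (rule nn_integral_cmult_indicator) (simp add: mrw_sets[OF mrw] NCb)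
        also have "\<dots> = 0" using cl[of y] by (cases "y \<in> D \<inter> N") auto
        finally show ?thesis .
      qed
      have DN0: "emeasure \<nu> (D \<inter> N) = 0"
      proof -
        have "emeasure \<nu> (D \<inter> N) = (\<integral>\<^sup>+x. emeasure (m x) (D \<inter> N) \<partial>\<nu>)" by (rule inv[OF DNb])
        also have "\<dots> = (\<integral>\<^sup>+x. indicator (UNIV - N) x * emeasure (m x) (D \<inter> N) \<partial>\<nu>)"
          by (rule nn_integral_cong) (auto simp: indicator_def mD0)
        also have "\<dots> = 0" using rev unfolding l r by simp
        finally show ?thesis .
      qed
      have "emeasure \<nu> (D \<inter> N) + emeasure \<nu> (D - N) = emeasure \<nu> ((D \<inter> N) \<union> (D - N))"
        by (rule plus_emeasure) (use DNb Db Nb sN in auto)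
      also have "(D \<inter> N) \<union> (D - N) = D" by auto
      finally have "emeasure \<nu> (D - N) = emeasure \<nu> D" using DN0 by simp
      moreover have "emeasure \<nu> (D - N) \<le> emeasure \<nu> (UNIV - N)"
        by (rule emeasure_mono) (use NCb sN in auto)
      ultimately have pNC: "0 < emeasure \<nu> (UNIV - N)" using pD by auto
      show "N_set m D \<in> null_sets \<nu>"
      proof (rule ccontr)
        assume "N_set m D \<notin> null_sets \<nu>"
        then have pN: "0 < emeasure \<nu> N" using Nb sN by (auto simp: N_def null_sets_def zero_less_iff_neq_zero)
        have "0 < L_m m \<nu> N (UNIV - N)" using H2 Nb NCb sN pN pNC by auto
        moreover have "L_m m \<nu> N (UNIV - N) = 0" unfolding L_m_def
          by (subst nn_integral_cong[where v="\<lambda>_. 0"]) (auto simp: indicator_def cl)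
        ultimately show False by simp
      qed
    qed
  qed
qed

end
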